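(* Let $X$ be a complex Banach space, let $\mathcal{F}$ be an algebra with unit $\mathbf{1}$, and let $\Phi:\mathcal{F}\to\mathcal{C}(X)$ be a proto-calculus. Then for all $f,g\in\mathcal{F}$ and $\lambda\in\mathbb{C}$: (a) If $\lambda\neq 0$ or $\Phi(f)\in\mathcal{L}(X)$, then $\Phi(\lambda f)=\lambda\Phi(f)$. (b) If $\Phi(g)\in\mathcal{L}(X)$, then $\Phi(f)+\Phi(g)=\Phi(f+g)$ and $\Phi(f)\Phi(g)=\Phi(fg)$. (c) If $fg=\mathbf{1}$, then $\Phi(g)$ is injective and $\Phi(g)^{-1}\subseteq\Phi(f)$. If in addition $fg=gf$, then $\Phi(g)^{-1}=\Phi(f)$. (d) The set $\mathrm{bdd}(\mathcal{F},\Phi)=\{f\in\mathcal{F}: \Phi(f)\in\mathcal{L}(X)\}$ is a unital subalgebra of $\mathcal{F}$, and $\Phi:\mathrm{bdd}(\mathcal{F},\Phi)\to\mathcal{L}(X)$ is an algebra homomorphism.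
   Context: $\mathcal{L}(X)$ denotes the bounded linear operators and $\mathcal{C}(X)$ the closed (possibly unbounded) linear operators on $X$. For operators, $S\subseteq T$ means inclusion of graphs; $S+T$ has domain $\mathrm{dom}(S)\cap\mathrm{dom}(T)$, $ST$ has domain $\{x\in\mathrm{dom}(T): Tx\in\mathrm{dom}(S)\}$, and $\lambda T$ has domain $\mathrm{dom}(T)$. The algebra $\mathcal{F}$ need not be commutative. A map $\Phi:\mathcal{F}\to\mathcal{C}(X)$ is a proto-calculus if for all $f,g\in\mathcal{F}$, $\lambda\in\mathbb{C}$: (FC1) $\Phi(\mathbf{1})=I$; (FC2) $\lambda\Phi(f)\subseteq\Phi(\lambda f)$ and $\Phi(f)+\Phi(g)\subseteq\Phi(f+g)$; (FC3) $\Phi(f)\Phi(g)\subseteq\Phi(fg)$ and $\mathrm{dom}(\Phi(f)\Phi(g))=\mathrm{dom}(\Phi(g))\cap\mathrm{dom}(\Phi(fg))$. *)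

theory Defs
  imports "HOL-Analysis.Analysis"
begin

class complex_vector = ab_group_add +
  fixes scaleC :: "complex \<Rightarrow> 'a \<Rightarrow> 'a" (infixr "*\<^sub>C" 75)
  assumes scaleC_add_right: "a *\<^sub>C (x + y) = a *\<^sub>C x + a *\<^sub>C y"
    and scaleC_add_left: "(a + b) *\<^sub>C x = a *\<^sub>C x + b *\<^sub>C x"
    and scaleC_scaleC: "a *\<^sub>C (b *\<^sub>C x) = (a * b) *\<^sub>C x"
    and scaleC_one: "1 *\<^sub>C x = x"

class complex_algebra_1 = complex_vector + ring_1 +
  assumes mult_scaleC_left: "(a *\<^sub>C x) * y = a *\<^sub>C (x * y)"
    and mult_scaleC_right: "x * (a *\<^sub>C y) = a *\<^sub>C (x * y)"

class complex_normed_vector = complex_vector + real_normed_vector +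
  assumes scaleR_scaleC: "scaleR r x = complex_of_real r *\<^sub>C x"
    and norm_scaleC: "norm (a *\<^sub>C x) = cmod a * norm x"

text \<open>An operator on X is identified with its graph, a subset of X \<times> X.
  Domain G is its domain; inclusion of operators is inclusion of graphs.\<close>

definition linear_op :: "('x::complex_vector \<times> 'x) set \<Rightarrow> bool" where
  "linear_op G \<longleftrightarrow> (0, 0) \<in> G
     \<and> (\<forall>x y u v. (x, y) \<in> G \<longrightarrow> (u, v) \<in> G \<longrightarrow> (x + u, y + v) \<in> G)
     \<and> (\<forall>c x y. (x, y) \<in> G \<longrightarrow> (c *\<^sub>C x, c *\<^sub>C y) \<in> G)
     \<and> (\<forall>y. (0, y) \<in> G \<longrightarrow> y = 0)"

definition closed_ops :: "('x::{complex_normed_vector,banach} \<times> 'x) set set" where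
  "closed_ops = {G. linear_op G \<and> closed G}"

definition bounded_ops :: "('x::{complex_normed_vector,banach} \<times> 'x) set set" where
  "bounded_ops = {G. linear_op G \<and> Domain G = UNIV \<and> (\<exists>C. \<forall>x y. (x, y) \<in> G \<longrightarrow> norm y \<le> C * norm x)}"

definition op_add :: "('x::complex_vector \<times> 'x) set \<Rightarrow> ('x \<times> 'x) set \<Rightarrow> ('x \<times> 'x) set" where
  "op_add S T = {(x, y + z) | x y z. (x, y) \<in> S \<and> (x, z) \<in> T}"

text \<open>op_mult S T is the product S T (first T, then S).\<close>
definition op_mult :: "('x \<times> 'x) set \<Rightarrow> ('x \<times> 'x) set \<Rightarrow> ('x \<times> 'x) set" where
  "op_mult S T = {(x, z) | x y z. (x, y) \<in> T \<and> (y, z) \<in> S}"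

definition op_scale :: "complex \<Rightarrow> ('x::complex_vector \<times> 'x) set \<Rightarrow> ('x \<times> 'x) set" where
  "op_scale c T = {(x, c *\<^sub>C y) | x y. (x, y) \<in> T}"

definition injective_op :: "('x \<times> 'x) set \<Rightarrow> bool" where
  "injective_op G \<longleftrightarrow> (\<forall>x1 x2 y. (x1, y) \<in> G \<longrightarrow> (x2, y) \<in> G \<longrightarrow> x1 = x2)"

definition op_inv :: "('x \<times> 'x) set \<Rightarrow> ('x \<times> 'x) set" where
  "op_inv G = converse G"

definition proto_calculus ::
  "('f::complex_algebra_1 \<Rightarrow> ('x::{complex_normed_vector,banach} \<times> 'x) set) \<Rightarrow> bool" where
  "proto_calculus \<Phi> \<longleftrightarrow>
     (\<forall>f. \<Phi> f \<in> closed_ops)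
   \<and> \<Phi> 1 = Id
   \<and> (\<forall>f c. op_scale c (\<Phi> f) \<subseteq> \<Phi> (c *\<^sub>C f))
   \<and> (\<forall>f g. op_add (\<Phi> f) (\<Phi> g) \<subseteq> \<Phi> (f + g))
   \<and> (\<forall>f g. op_mult (\<Phi> f) (\<Phi> g) \<subseteq> \<Phi> (f * g)
           \<and> Domain (op_mult (\<Phi> f) (\<Phi> g)) = Domain (\<Phi> g) \<inter> Domain (\<Phi> (f * g)))"

definition bdd_set ::
  "('f::complex_algebra_1 \<Rightarrow> ('x::{complex_normed_vector,banach} \<times> 'x) set) \<Rightarrow> 'f set" where
  "bdd_set \<Phi> = {f. \<Phi> f \<in> bounded_ops}"

definition unital_subalgebra :: "'f::complex_algebra_1 set \<Rightarrow> bool" where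
  "unital_subalgebra B \<longleftrightarrow> 1 \<in> B
     \<and> (\<forall>f\<in>B. \<forall>g\<in>B. f + g \<in> B \<and> f * g \<in> B)
     \<and> (\<forall>c. \<forall>f\<in>B. c *\<^sub>C f \<in> B)"

definition alg_hom_into_bounded ::
  "'f::complex_algebra_1 set \<Rightarrow> ('f \<Rightarrow> ('x::{complex_normed_vector,banach} \<times> 'x) set) \<Rightarrow> bool" where
  "alg_hom_into_bounded B \<Phi> \<longleftrightarrow> (\<forall>f\<in>B. \<Phi> f \<in> bounded_ops)
     \<and> \<Phi> 1 = Id
     \<and> (\<forall>f\<in>B. \<forall>g\<in>B. \<Phi> (f + g) = op_add (\<Phi> f) (\<Phi> g) \<and> \<Phi> (f * g) = op_mult (\<Phi> f) (\<Phi> g))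
     \<and> (\<forall>c. \<forall>f\<in>B. \<Phi> (c *\<^sub>C f) = op_scale c (\<Phi> f))"

end

theory Submission
  imports Defs
begin

lemma scaleC_zero_left': "(0::complex) *\<^sub>C (x::'a::complex_vector) = 0"
proof -
  have "0 *\<^sub>C x = 0 *\<^sub>C x + 0 *\<^sub>C x" using scaleC_add_left[of 0 0 x] by simp
  then show ?thesis by simp
qed

lemma scaleC_minus1': "(-1::complex) *\<^sub>C (x::'a::complex_vector) = - x"
proof -
  have "x + (-1) *\<^sub>C x = 0"
    using scaleC_add_left[of 1 "-1" x] scaleC_one[of x] scaleC_zero_left'[of x] by simp
  then show ?thesis by (simp add: add_eq_0_iff)
qed

lemma lin_sv:
  assumes "linear_op G" "(x, y) \<in> G" "(x, y') \<in> G"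
  shows "y = y'"
proof -
  have ad: "\<And>x y u v. (x, y) \<in> G \<Longrightarrow> (u, v) \<in> G \<Longrightarrow> (x + u, y + v) \<in> G"
    and sc: "\<And>c x y. (x, y) \<in> G \<Longrightarrow> (c *\<^sub>C x, c *\<^sub>C y) \<in> G"
    and z: "\<And>y. (0, y) \<in> G \<Longrightarrow> y = 0"
    using assms(1) unfolding linear_op_def by auto
  have "((-1) *\<^sub>C x, (-1) *\<^sub>C y') \<in> G" by (rule sc[OF assms(3)])
  then have "(-x, -y') \<in> G" by (simp add: scaleC_minus1')
  then have "(x + -x, y + -y') \<in> G" by (rule ad[OF assms(2)])
  then have "(0, y - y') \<in> G" by simp
  then have "y - y' = 0" by (rule z)
  then show ?thesis by simp
qed

lemma bdd_pos:
  assumes "G \<in> bounded_ops"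
  shows "\<exists>C\<ge>0. \<forall>x y. (x, y) \<in> G \<longrightarrow> norm y \<le> C * norm x"
proof -
  obtain C where C: "\<forall>x y. (x, y) \<in> G \<longrightarrow> norm y \<le> C * norm x"
    using assms unfolding bounded_ops_def by blast
  have "\<forall>x y. (x, y) \<in> G \<longrightarrow> norm y \<le> max C 0 * norm x"
  proof (intro allI impI)
    fix x y assume "(x, y) \<in> G"
    then have "norm y \<le> C * norm x" using C by blast
    also have "\<dots> \<le> max C 0 * norm x" by (intro mult_right_mono) auto
    finally show "norm y \<le> max C 0 * norm x" .
  qed
  then show ?thesis by (intro exI[of _ "max C 0"]) auto
qed

lemma bdd_dom:
  assumes "G \<in> bounded_ops"
  obtains y where "(x, y) \<in> G"
proof -
  have "Domain G = UNIV" using assms unfolding bounded_ops_def by simp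
  then have "x \<in> Domain G" by simp
  then show ?thesis using that by (rule DomainE)
qed

lemma Id_bounded: "(Id :: ('x::{complex_normed_vector,banach} \<times> 'x) set) \<in> bounded_ops"
  unfolding bounded_ops_def linear_op_def by (auto intro!: exI[of _ 1])

theorem theorem2p1:
  fixes \<Phi> :: "'f::complex_algebra_1 \<Rightarrow> ('x::{complex_normed_vector,banach} \<times> 'x) set"
  assumes "proto_calculus \<Phi>"
  shows "(\<forall>f c. (c \<noteq> 0 \<or> \<Phi> f \<in> bounded_ops) \<longrightarrow> \<Phi> (c *\<^sub>C f) = op_scale c (\<Phi> f))
    \<and> (\<forall>f g. \<Phi> g \<in> bounded_ops \<longrightarrow>
          op_add (\<Phi> f) (\<Phi> g) = \<Phi> (f + g) \<and> op_mult (\<Phi> f) (\<Phi> g) = \<Phi> (f * g))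
    \<and> (\<forall>f g. f * g = 1 \<longrightarrow>
          injective_op (\<Phi> g) \<and> op_inv (\<Phi> g) \<subseteq> \<Phi> f
          \<and> (f * g = g * f \<longrightarrow> op_inv (\<Phi> g) = \<Phi> f))
    \<and> unital_subalgebra (bdd_set \<Phi>)
    \<and> alg_hom_into_bounded (bdd_set \<Phi>) \<Phi>"
proof -
  note H = assms[unfolded proto_calculus_def]
  have H1: "\<forall>f. \<Phi> f \<in> closed_ops" using H by (rule conjunct1)
  have one: "\<Phi> 1 = Id" using H by (rule conjunct1[OF conjunct2])
  have H3: "\<forall>f c. op_scale c (\<Phi> f) \<subseteq> \<Phi> (c *\<^sub>C f)"
    using H by (rule conjunct1[OF conjunct2[OF conjunct2]])
  have H4: "\<forall>f g. op_add (\<Phi> f) (\<Phi> g) \<subseteq> \<Phi> (f + g)"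
    using H by (rule conjunct1[OF conjunct2[OF conjunct2[OF conjunct2]]])
  have H5: "\<forall>f g. op_mult (\<Phi> f) (\<Phi> g) \<subseteq> \<Phi> (f * g)
           \<and> Domain (op_mult (\<Phi> f) (\<Phi> g)) = Domain (\<Phi> g) \<inter> Domain (\<Phi> (f * g))"
    using H by (rule conjunct2[OF conjunct2[OF conjunct2[OF conjunct2]]])
  have lin: "linear_op (\<Phi> f)" for f
  proof -
    have "\<Phi> f \<in> closed_ops" using H1 by (rule spec)
    then show ?thesis unfolding closed_ops_def by (rule CollectE) (erule conjunct1)
  qed
  have sc: "op_scale c (\<Phi> f) \<subseteq> \<Phi> (c *\<^sub>C f)" for f c using H3 by (elim allE)
  have ad: "op_add (\<Phi> f) (\<Phi> g) \<subseteq> \<Phi> (f + g)" for f g using H4 by (elim allE)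
  have mu: "op_mult (\<Phi> f) (\<Phi> g) \<subseteq> \<Phi> (f * g)" for f g using H5 by (elim allE conjE)
  have md: "Domain (op_mult (\<Phi> f) (\<Phi> g)) = Domain (\<Phi> g) \<inter> Domain (\<Phi> (f * g))" for f g
    using H5 by (elim allE conjE)
  have sv: "y = y'" if "(x, y) \<in> \<Phi> f" "(x, y') \<in> \<Phi> f" for f x y y'
    by (rule lin_sv[OF lin that])
  have A: "\<Phi> (c *\<^sub>C f) = op_scale c (\<Phi> f)" if h: "c \<noteq> 0 \<or> \<Phi> f \<in> bounded_ops" for f c
  proof
    show "op_scale c (\<Phi> f) \<subseteq> \<Phi> (c *\<^sub>C f)" by (rule sc)
  next
    show "\<Phi> (c *\<^sub>C f) \<subseteq> op_scale c (\<Phi> f)"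
    proof
      fix p assume p: "p \<in> \<Phi> (c *\<^sub>C f)"
      obtain x z where xz: "p = (x, z)" by (cases p)
      show "p \<in> op_scale c (\<Phi> f)"
      proof (cases "c = 0")
        case False
        have "(x, inverse c *\<^sub>C z) \<in> op_scale (inverse c) (\<Phi> (c *\<^sub>C f))"
          using p unfolding xz op_scale_def by blast
        then have "(x, inverse c *\<^sub>C z) \<in> \<Phi> (inverse c *\<^sub>C (c *\<^sub>C f))"
          using sc[of "inverse c" "c *\<^sub>C f"] by (rule rev_subsetD)
        moreover have "inverse c *\<^sub>C (c *\<^sub>C f) = f"
          using False by (simp add: scaleC_scaleC scaleC_one)
        ultimately have "(x, inverse c *\<^sub>C z) \<in> \<Phi> f" by simp
        then have "(x, c *\<^sub>C (inverse c *\<^sub>C z)) \<in> op_scale c (\<Phi> f)"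
          unfolding op_scale_def by blast
        moreover have "c *\<^sub>C (inverse c *\<^sub>C z) = z"
          using False by (simp add: scaleC_scaleC scaleC_one)
        ultimately show ?thesis unfolding xz by simp
      next
        case True
        then have b: "\<Phi> f \<in> bounded_ops" using h by simp
        then obtain y where y: "(x, y) \<in> \<Phi> f" by (rule bdd_dom)
        then have y1: "(x, c *\<^sub>C y) \<in> op_scale c (\<Phi> f)" unfolding op_scale_def by blast
        then have y2: "(x, c *\<^sub>C y) \<in> \<Phi> (c *\<^sub>C f)"
          using sc[of c f] by (rule rev_subsetD)
        have "z = c *\<^sub>C y" using sv[of x z "c *\<^sub>C f" "c *\<^sub>C y"] p y2 unfolding xz by blast
        then show ?thesis using y1 unfolding xz by simp
      qed
    qed
  qed
  have B1: "op_add (\<Phi> f) (\<Phi> g) = \<Phi> (f + g)" if b: "\<Phi> g \<in> bounded_ops" for f g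
  proof
    show "op_add (\<Phi> f) (\<Phi> g) \<subseteq> \<Phi> (f + g)" by (rule ad)
  next
    show "\<Phi> (f + g) \<subseteq> op_add (\<Phi> f) (\<Phi> g)"
    proof
      fix p assume p: "p \<in> \<Phi> (f + g)"
      obtain x w where xw: "p = (x, w)" by (cases p)
      obtain z where z: "(x, z) \<in> \<Phi> g" using b by (rule bdd_dom)
      have "(x, (-1) *\<^sub>C z) \<in> \<Phi> ((-1) *\<^sub>C g)" using z sc unfolding op_scale_def by blast
      then have "(x, - z) \<in> \<Phi> (- g)" by (simp add: scaleC_minus1')
      then have "(x, w + - z) \<in> op_add (\<Phi> (f + g)) (\<Phi> (- g))"
        using p xw unfolding op_add_def by blast
      then have "(x, w + - z) \<in> \<Phi> (f + g + - g)" using ad by blast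
      then have "(x, w - z) \<in> \<Phi> f" by simp
      then have "(x, w - z + z) \<in> op_add (\<Phi> f) (\<Phi> g)" using z unfolding op_add_def by blast
      then show "p \<in> op_add (\<Phi> f) (\<Phi> g)" using xw by simp
    qed
  qed
  have B2: "op_mult (\<Phi> f) (\<Phi> g) = \<Phi> (f * g)" if b: "\<Phi> g \<in> bounded_ops" for f g
  proof
    show "op_mult (\<Phi> f) (\<Phi> g) \<subseteq> \<Phi> (f * g)" by (rule mu)
  next
    show "\<Phi> (f * g) \<subseteq> op_mult (\<Phi> f) (\<Phi> g)"
    proof
      fix p assume p: "p \<in> \<Phi> (f * g)"
      obtain x w where xw: "p = (x, w)" by (cases p)
      have "x \<in> Domain (\<Phi> g)" using b by (auto elim: bdd_dom[where x=x])
      moreover have "x \<in> Domain (\<Phi> (f * g))" using p xw by blast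
      ultimately have "x \<in> Domain (op_mult (\<Phi> f) (\<Phi> g))" using md by blast
      then obtain w' where w': "(x, w') \<in> op_mult (\<Phi> f) (\<Phi> g)" by blast
      then have "(x, w') \<in> \<Phi> (f * g)" using mu by blast
      then have "w = w'" using p xw sv[of x w "f * g" w'] by simp
      then show "p \<in> op_mult (\<Phi> f) (\<Phi> g)" using w' xw by simp
    qed
  qed
  have Cinv: "(y, x) \<in> \<Phi> f" if fg: "f * g = 1" and xy: "(x, y) \<in> \<Phi> g" for f g x y
  proof -
    have fgI: "\<Phi> (f * g) = Id" using fg one by simp
    have "x \<in> Domain (\<Phi> g)" using xy by (rule DomainI)
    then have "x \<in> Domain (op_mult (\<Phi> f) (\<Phi> g))" unfolding md fgI by simp
    then obtain z where z: "(x, z) \<in> op_mult (\<Phi> f) (\<Phi> g)" by (rule DomainE)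
    then have "(x, z) \<in> \<Phi> (f * g)" using mu by (rule rev_subsetD)
    then have "(x, z) \<in> Id" unfolding fgI .
    then have "z = x" by simp
    from z obtain y' where "(x, y') \<in> \<Phi> g" "(y', z) \<in> \<Phi> f" unfolding op_mult_def by blast
    then have "(y', x) \<in> \<Phi> f" "y' = y" using sv[of x y' g y] xy \<open>z = x\<close> by simp_all
    then show ?thesis by simp
  qed
  have C: "injective_op (\<Phi> g) \<and> op_inv (\<Phi> g) \<subseteq> \<Phi> f
          \<and> (f * g = g * f \<longrightarrow> op_inv (\<Phi> g) = \<Phi> f)" if fg: "f * g = 1" for f g
  proof (intro conjI impI)
    show "injective_op (\<Phi> g)" unfolding injective_op_def
    proof (intro allI impI)
      fix x1 x2 y assume "(x1, y) \<in> \<Phi> g" "(x2, y) \<in> \<Phi> g"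
      then have "(y, x1) \<in> \<Phi> f" "(y, x2) \<in> \<Phi> f" using Cinv[OF fg] by simp_all
      then show "x1 = x2" by (rule sv)
    qed
    show "op_inv (\<Phi> g) \<subseteq> \<Phi> f" unfolding op_inv_def
    proof
      fix p assume "p \<in> converse (\<Phi> g)"
      then obtain a b where "p = (a, b)" "(b, a) \<in> \<Phi> g" by (cases p) simp
      then show "p \<in> \<Phi> f" using Cinv[OF fg] by simp
    qed
    assume "f * g = g * f"
    then have gf: "g * f = 1" using fg by simp
    show "op_inv (\<Phi> g) = \<Phi> f" unfolding op_inv_def
    proof (rule set_eqI)
      fix p :: "'x \<times> 'x"
      obtain a b where p: "p = (a, b)" by (cases p)
      have "(b, a) \<in> \<Phi> g \<longleftrightarrow> (a, b) \<in> \<Phi> f" using Cinv[OF fg] Cinv[OF gf] by blast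
      then show "p \<in> converse (\<Phi> g) \<longleftrightarrow> p \<in> \<Phi> f" unfolding p by simp
    qed
  qed
  have bd_add: "\<Phi> (f + g) \<in> bounded_ops" if bf: "\<Phi> f \<in> bounded_ops" and bg: "\<Phi> g \<in> bounded_ops" for f g
  proof -
    obtain C1 where C1: "\<forall>x y. (x, y) \<in> \<Phi> f \<longrightarrow> norm y \<le> C1 * norm x"
      using bf unfolding bounded_ops_def by blast
    obtain C2 where C2: "\<forall>x y. (x, y) \<in> \<Phi> g \<longrightarrow> norm y \<le> C2 * norm x"
      using bg unfolding bounded_ops_def by blast
    have "\<forall>x y. (x, y) \<in> \<Phi> (f + g) \<longrightarrow> norm y \<le> (C1 + C2) * norm x"
    proof (intro allI impI)
      fix x y assume "(x, y) \<in> \<Phi> (f + g)"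
      then obtain u v where "y = u + v" "(x, u) \<in> \<Phi> f" "(x, v) \<in> \<Phi> g"
        using B1[OF bg, of f] unfolding op_add_def by blast
      then have "norm y \<le> norm u + norm v" using norm_triangle_ineq by blast
      also have "\<dots> \<le> C1 * norm x + C2 * norm x" using C1 C2 \<open>(x, u) \<in> \<Phi> f\<close> \<open>(x, v) \<in> \<Phi> g\<close>
        by (meson add_mono)
      finally show "norm y \<le> (C1 + C2) * norm x" by (simp add: distrib_right)
    qed
    moreover have "Domain (\<Phi> (f + g)) = UNIV"
    proof -
      have "x \<in> Domain (op_add (\<Phi> f) (\<Phi> g))" for x
      proof -
        obtain u where u: "(x, u) \<in> \<Phi> f" using bf by (rule bdd_dom)
        obtain v where v: "(x, v) \<in> \<Phi> g" using bg by (rule bdd_dom)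
        have "(x, u + v) \<in> op_add (\<Phi> f) (\<Phi> g)" using u v unfolding op_add_def by blast
        then show ?thesis by (rule DomainI)
      qed
      then show ?thesis using B1[OF bg, of f] by auto
    qed
    ultimately show ?thesis unfolding bounded_ops_def using lin by (intro CollectI conjI) blast+
  qed
  have bd_mult: "\<Phi> (f * g) \<in> bounded_ops" if bf: "\<Phi> f \<in> bounded_ops" and bg: "\<Phi> g \<in> bounded_ops" for f g
  proof -
    obtain C1 where C1: "C1 \<ge> 0" "\<forall>x y. (x, y) \<in> \<Phi> f \<longrightarrow> norm y \<le> C1 * norm x"
      using bdd_pos[OF bf] by blast
    obtain C2 where C2: "\<forall>x y. (x, y) \<in> \<Phi> g \<longrightarrow> norm y \<le> C2 * norm x"
      using bg unfolding bounded_ops_def by blast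
    have "\<forall>x y. (x, y) \<in> \<Phi> (f * g) \<longrightarrow> norm y \<le> (C1 * C2) * norm x"
    proof (intro allI impI)
      fix x y assume "(x, y) \<in> \<Phi> (f * g)"
      then obtain u where u: "(x, u) \<in> \<Phi> g" "(u, y) \<in> \<Phi> f"
        using B2[OF bg, of f] unfolding op_mult_def by blast
      have "norm y \<le> C1 * norm u" using C1 u by blast
      also have "\<dots> \<le> C1 * (C2 * norm x)" using C1(1) C2 u by (meson mult_left_mono)
      finally show "norm y \<le> (C1 * C2) * norm x" by (simp add: mult.assoc)
    qed
    moreover have "Domain (\<Phi> (f * g)) = UNIV"
    proof -
      have "x \<in> Domain (op_mult (\<Phi> f) (\<Phi> g))" for x
      proof -
        obtain u where u: "(x, u) \<in> \<Phi> g" using bg by (rule bdd_dom)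
        obtain v where v: "(u, v) \<in> \<Phi> f" using bf by (rule bdd_dom)
        have "(x, v) \<in> op_mult (\<Phi> f) (\<Phi> g)" using u v unfolding op_mult_def by blast
        then show ?thesis by (rule DomainI)
      qed
      then show ?thesis using B2[OF bg, of f] by auto
    qed
    ultimately show ?thesis unfolding bounded_ops_def using lin by (intro CollectI conjI) blast+
  qed
  have bd_sc: "\<Phi> (c *\<^sub>C f) \<in> bounded_ops" if bf: "\<Phi> f \<in> bounded_ops" for f c
  proof -
    obtain C1 where C1: "\<forall>x y. (x, y) \<in> \<Phi> f \<longrightarrow> norm y \<le> C1 * norm x"
      using bf unfolding bounded_ops_def by blast
    have "\<forall>x y. (x, y) \<in> \<Phi> (c *\<^sub>C f) \<longrightarrow> norm y \<le> (cmod c * C1) * norm x"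
    proof (intro allI impI)
      fix x y assume "(x, y) \<in> \<Phi> (c *\<^sub>C f)"
      then obtain u where u: "y = c *\<^sub>C u" "(x, u) \<in> \<Phi> f"
        using A[of c f, OF disjI2[OF bf]] unfolding op_scale_def by blast
      have "norm y = cmod c * norm u" using u by (simp add: norm_scaleC)
      also have "\<dots> \<le> cmod c * (C1 * norm x)" using C1 u by (simp add: mult_left_mono)
      finally show "norm y \<le> (cmod c * C1) * norm x" by (simp add: mult.assoc)
    qed
    moreover have "Domain (\<Phi> (c *\<^sub>C f)) = UNIV"
    proof -
      have "x \<in> Domain (\<Phi> (c *\<^sub>C f))" for x
      proof -
        obtain u where u: "(x, u) \<in> \<Phi> f" using bf by (rule bdd_dom)
        have "(x, c *\<^sub>C u) \<in> op_scale c (\<Phi> f)" using u unfolding op_scale_def by blast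
        then show ?thesis using sc by blast
      qed
      then show ?thesis by blast
    qed
    ultimately show ?thesis unfolding bounded_ops_def using lin by (intro CollectI conjI) blast+
  qed
  have D1: "unital_subalgebra (bdd_set \<Phi>)"
    unfolding unital_subalgebra_def bdd_set_def
    by (simp add: one Id_bounded bd_add bd_mult bd_sc)
  have D2: "alg_hom_into_bounded (bdd_set \<Phi>) \<Phi>"
    unfolding alg_hom_into_bounded_def bdd_set_def
    by (simp add: one A B1 B2)
  have A': "\<forall>f c. (c \<noteq> 0 \<or> \<Phi> f \<in> bounded_ops) \<longrightarrow> \<Phi> (c *\<^sub>C f) = op_scale c (\<Phi> f)"
    using A by simp
  have B': "\<forall>f g. \<Phi> g \<in> bounded_ops \<longrightarrow>
          op_add (\<Phi> f) (\<Phi> g) = \<Phi> (f + g) \<and> op_mult (\<Phi> f) (\<Phi> g) = \<Phi> (f * g)"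
    using B1 B2 by simp
  have C': "\<forall>f g. f * g = 1 \<longrightarrow>
          injective_op (\<Phi> g) \<and> op_inv (\<Phi> g) \<subseteq> \<Phi> f
          \<and> (f * g = g * f \<longrightarrow> op_inv (\<Phi> g) = \<Phi> f)"
    using C by simp
  show ?thesis using A' B' C' D1 D2 by (intro conjI)
qed

end
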